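(* Let $G$ be a finite group and $N\lhd G$ a normal subgroup which is simple and non-abelian. Let $r\in N$. If $\mathcal O_r^G\cap N\neq \mathcal O_r^N$, then $\mathcal O_r^G$ is of type C.
   Context: For $H\leqslant G$ and $g\in G$, $\mathcal O_g^H$ is the orbit of $g$ under conjugation by $H$. A conjugacy class $\mathcal O$ of a finite group $G$ is of type C if there are $H\leqslant G$ and $r,s\in H\cap\mathcal O$ such that $rs\neq sr$, $H=\langle \mathcal O_r^H,\mathcal O_s^H\rangle$, $\mathcal O_r^H\neq\mathcal O_s^H$, and either $\min\{|\mathcal O_r^H|,|\mathcal O_s^H|\}>2$ or $\max\{|\mathcal O_r^H|,|\mathcal O_s^H|\}>4$. *)

theory Defs
  imports "HOL-Algebra.Algebra"
begin

definition conj_orbit :: "('a, 'b) monoid_scheme \<Rightarrow> 'a set \<Rightarrow> 'a \<Rightarrow> 'a set" where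
  "conj_orbit G H g = {h \<otimes>\<^bsub>G\<^esub> g \<otimes>\<^bsub>G\<^esub> inv\<^bsub>G\<^esub> h | h. h \<in> H}"

definition type_C :: "('a, 'b) monoid_scheme \<Rightarrow> 'a set \<Rightarrow> bool" where
  "type_C G Cl \<longleftrightarrow>
     (\<exists>H r s. subgroup H G \<and> r \<in> H \<inter> Cl \<and> s \<in> H \<inter> Cl \<and>
        r \<otimes>\<^bsub>G\<^esub> s \<noteq> s \<otimes>\<^bsub>G\<^esub> r \<and>
        H = generate G (conj_orbit G H r \<union> conj_orbit G H s) \<and>
        conj_orbit G H r \<noteq> conj_orbit G H s \<and>
        (min (card (conj_orbit G H r)) (card (conj_orbit G H s)) > 2 \<or>
         max (card (conj_orbit G H r)) (card (conj_orbit G H s)) > 4))"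

end

theory Submission
  imports Defs
begin

lemma gen_normal_full:
  assumes G: "group G" and sN: "subgroup N G" and simp: "simple_group (G\<lparr>carrier := N\<rparr>)"
    and S: "S \<subseteq> N" and cl: "\<And>h g. h \<in> S \<Longrightarrow> g \<in> N \<Longrightarrow> g \<otimes>\<^bsub>G\<^esub> h \<otimes>\<^bsub>G\<^esub> inv\<^bsub>G\<^esub> g \<in> S"
    and x: "x \<in> S" "x \<noteq> \<one>\<^bsub>G\<^esub>"
  shows "generate G S = N"
proof -
  interpret G: group G by fact
  interpret K: simple_group "G\<lparr>carrier := N\<rparr>" by fact
  have "generate (G\<lparr>carrier := N\<rparr>) S \<lhd> G\<lparr>carrier := N\<rparr>"
  proof (rule K.normal_generateI)
    show "S \<subseteq> carrier (G\<lparr>carrier := N\<rparr>)" using S by simp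
    fix h g assume "h \<in> S" "g \<in> carrier (G\<lparr>carrier := N\<rparr>)"
    then show "g \<otimes>\<^bsub>G\<lparr>carrier := N\<rparr>\<^esub> h \<otimes>\<^bsub>G\<lparr>carrier := N\<rparr>\<^esub> inv\<^bsub>G\<lparr>carrier := N\<rparr>\<^esub> g \<in> S"
      using cl sN by simp
  qed
  then have "generate G S = N \<or> generate G S = {\<one>\<^bsub>G\<^esub>}"
    using K.no_real_normal_subgroup G.generate_consistent[OF S sN] by simp
  moreover have "x \<in> generate G S" using x(1) by (rule generate.incl)
  ultimately show ?thesis using x by auto
qed

lemma gen_comm:
  fixes G (structure)
  assumes G: "group G" and S: "S \<subseteq> carrier G" and b: "b \<in> carrier G"
    and c: "\<And>a. a \<in> S \<Longrightarrow> a \<otimes>\<^bsub>G\<^esub> b = b \<otimes>\<^bsub>G\<^esub> a"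
    and h: "h \<in> generate G S"
  shows "h \<otimes>\<^bsub>G\<^esub> b = b \<otimes>\<^bsub>G\<^esub> h"
  using h
proof (induction rule: generate.induct)
  case one then show ?case using G b by (simp add: group.is_monoid monoid.l_one monoid.r_one)
next
  case (incl h) then show ?case using c by simp
next
  case (inv a)
  interpret group G by fact
  have a: "a \<in> carrier G" using inv S by auto
  have e: "a \<otimes> b = b \<otimes> a" using c inv by simp
  have "inv a \<otimes> b = inv a \<otimes> (b \<otimes> a) \<otimes> inv a"
    using a b by (simp add: m_assoc)
  also have "\<dots> = b \<otimes> inv a" using a b e[symmetric] by (simp add: m_assoc[symmetric])
  finally show ?case .
next
  case (eng h1 h2)
  interpret group G by fact
  have "h1 \<in> carrier G" "h2 \<in> carrier G" using eng generate_in_carrier[OF S] by auto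
  note c1 = this
  have "h1 \<otimes> h2 \<otimes> b = h1 \<otimes> (h2 \<otimes> b)" using c1 b by (simp add: m_assoc)
  also have "\<dots> = h1 \<otimes> (b \<otimes> h2)" using eng(4) by simp
  also have "\<dots> = h1 \<otimes> b \<otimes> h2" using c1 b by (simp add: m_assoc)
  also have "\<dots> = b \<otimes> h1 \<otimes> h2" using eng by simp
  also have "\<dots> = b \<otimes> (h1 \<otimes> h2)" using c1 b by (simp add: m_assoc)
  finally show ?case .
qed

lemma conj_mult:
  fixes G (structure)
  assumes "group G" "g \<in> carrier G" "h \<in> carrier G" "x \<in> carrier G"
  shows "g \<otimes> (h \<otimes> x \<otimes> inv h) \<otimes> inv g = (g \<otimes> h) \<otimes> x \<otimes> inv (g \<otimes> h)"
proof -
  interpret group G by fact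
  show ?thesis using assms by (simp add: m_assoc inv_mult_group)
qed

lemma orbit_closed:
  fixes G (structure)
  assumes "group G" "subgroup N G" "x \<in> carrier G" "y \<in> conj_orbit G N x" "g \<in> N"
  shows "g \<otimes> y \<otimes> inv g \<in> conj_orbit G N x"
proof -
  interpret group G by fact
  obtain h where h: "h \<in> N" "y = h \<otimes> x \<otimes> inv h" using assms(4) unfolding conj_orbit_def by auto
  have "g \<otimes> y \<otimes> inv g = (g \<otimes> h) \<otimes> x \<otimes> inv (g \<otimes> h)"
    using conj_mult[OF assms(1), of g h x] h assms subgroup.mem_carrier by metis
  moreover have "g \<otimes> h \<in> N" using h assms subgroup.m_closed by metis
  ultimately show ?thesis unfolding conj_orbit_def by auto
qed

lemma orbit_self:
  fixes G (structure)
  assumes "group G" "subgroup N G" "x \<in> carrier G"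
  shows "x \<in> conj_orbit G N x"
proof -
  interpret group G by fact
  have "\<one> \<in> N" using assms subgroup.one_closed by metis
  moreover have "x = \<one> \<otimes> x \<otimes> inv \<one>" using assms by simp
  ultimately show ?thesis unfolding conj_orbit_def by (metis (mono_tags, lifting) inv_one mem_Collect_eq)
qed

lemma orbit_sub:
  fixes G (structure)
  assumes "group G" "subgroup N G" "x \<in> N"
  shows "conj_orbit G N x \<subseteq> N"
  using assms unfolding conj_orbit_def
  by (auto intro!: subgroup.m_closed subgroup.m_inv_closed)

lemma orbit_sub_carrier:
  fixes G (structure)
  assumes "group G" "subgroup N G" "x \<in> carrier G"
  shows "conj_orbit G N x \<subseteq> carrier G"
proof -
  interpret group G by fact
  show ?thesis using assms subgroup.mem_carrier unfolding conj_orbit_def by fastforce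
qed

lemma orbit_trans:
  fixes G (structure)
  assumes "group G" "subgroup N G" "x \<in> carrier G" "y \<in> conj_orbit G N x"
  shows "conj_orbit G N y = conj_orbit G N x"
proof -
  interpret group G by fact
  obtain h where h: "h \<in> N" "y = h \<otimes> x \<otimes> inv h" using assms(4) unfolding conj_orbit_def by auto
  have hc: "h \<in> carrier G" using h assms subgroup.mem_carrier by metis
  have y: "y \<in> carrier G" using h hc assms by simp
  have x: "x = inv h \<otimes> y \<otimes> inv (inv h)" using h hc assms by (simp add: m_assoc[symmetric]) (simp add: m_assoc)
  have ih: "inv h \<in> N" using h assms subgroup.m_inv_closed by metis
  show ?thesis
  proof
    show "conj_orbit G N y \<subseteq> conj_orbit G N x"
    proof
      fix z assume "z \<in> conj_orbit G N y"
      then obtain g where "g \<in> N" "z = g \<otimes> y \<otimes> inv g" unfolding conj_orbit_def by auto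
      then show "z \<in> conj_orbit G N x" using orbit_closed[OF assms] by simp
    qed
  next
    have x': "x \<in> conj_orbit G N y" using x ih unfolding conj_orbit_def by auto
    show "conj_orbit G N x \<subseteq> conj_orbit G N y"
    proof
      fix z assume "z \<in> conj_orbit G N x"
      then obtain g where "g \<in> N" "z = g \<otimes> x \<otimes> inv g" unfolding conj_orbit_def by auto
      then show "z \<in> conj_orbit G N y" using orbit_closed[OF assms(1,2) y x'] by simp
    qed
  qed
qed

lemma all_comm:
  assumes "group G" "subgroup N G" "\<And>u v. u \<in> N \<Longrightarrow> v \<in> N \<Longrightarrow> u \<otimes>\<^bsub>G\<^esub> v = v \<otimes>\<^bsub>G\<^esub> u"
  shows "comm_group (G\<lparr>carrier := N\<rparr>)"
proof -
  have "group (G\<lparr>carrier := N\<rparr>)" using assms group.subgroup_imp_group by blast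
  then show ?thesis by (rule group.group_comm_groupI) (use assms in simp)
qed

lemma orbit_gen:
  fixes G (structure)
  assumes G: "group G" and sN: "subgroup N G" and simp: "simple_group (G\<lparr>carrier := N\<rparr>)"
    and x: "x \<in> N" "x \<noteq> \<one>"
  shows "generate G (conj_orbit G N x) = N"
proof -
  have xc: "x \<in> carrier G" using x sN subgroup.mem_carrier by metis
  show ?thesis
    by (rule gen_normal_full[OF G sN simp orbit_sub[OF G sN x(1)] orbit_closed[OF G sN xc]
          orbit_self[OF G sN xc] x(2)])
qed

lemma comm_gen_all:
  fixes G (structure)
  assumes G: "group G" and sN: "subgroup N G" and S: "S \<subseteq> N" and gen: "generate G S = N"
    and c: "\<And>u v. u \<in> S \<Longrightarrow> v \<in> S \<Longrightarrow> u \<otimes> v = v \<otimes> u"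
  shows "comm_group (G\<lparr>carrier := N\<rparr>)"
proof -
  interpret group G by fact
  have Sc: "S \<subseteq> carrier G" using S sN subgroup.subset by blast
  have Nc: "N \<subseteq> carrier G" using sN subgroup.subset by blast
  have 1: "h \<otimes> v = v \<otimes> h" if v: "v \<in> S" and h: "h \<in> N" for v h
  proof -
    have vc: "v \<in> carrier G" using v Sc by blast
    have hg: "h \<in> generate G S" using h gen by simp
    show ?thesis by (rule gen_comm[OF G Sc vc _ hg]) (rule c[OF _ v])
  qed
  have 2: "h \<otimes> y = y \<otimes> h" if y: "y \<in> N" and h: "h \<in> N" for y h
  proof -
    have yc: "y \<in> carrier G" using y Nc by blast
    have hg: "h \<in> generate G S" using h gen by simp
    show ?thesis by (rule gen_comm[OF G Sc yc _ hg]) (rule sym, rule 1[OF _ y])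
  qed
  show ?thesis using all_comm[OF G sN 2] by blast
qed

lemma central_trivial:
  fixes G (structure)
  assumes G: "group G" and sN: "subgroup N G" and simp: "simple_group (G\<lparr>carrier := N\<rparr>)"
    and nc: "\<not> comm_group (G\<lparr>carrier := N\<rparr>)"
    and b: "b \<in> N" and c: "\<And>u. u \<in> N \<Longrightarrow> u \<otimes> b = b \<otimes> u"
  shows "b = \<one>"
proof (rule ccontr)
  interpret group G by fact
  assume nb: "b \<noteq> \<one>"
  define Z where "Z = {z \<in> N. \<forall>u\<in>N. u \<otimes> z = z \<otimes> u}"
  have ZN: "Z \<subseteq> N" unfolding Z_def by auto
  have cl: "g \<otimes> h \<otimes> inv g \<in> Z" if "h \<in> Z" "g \<in> N" for h g
  proof -
    have hN: "h \<in> N" using that(1) unfolding Z_def by simp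
    have hc: "h \<in> carrier G" "g \<in> carrier G" using hN that(2) subgroup.mem_carrier[OF sN] by auto
    have "\<forall>u\<in>N. u \<otimes> h = h \<otimes> u" using that(1) unfolding Z_def by simp
    then have e: "g \<otimes> h = h \<otimes> g" using that(2) by blast
    have "g \<otimes> h \<otimes> inv g = h \<otimes> g \<otimes> inv g" by (simp only: e)
    also have "\<dots> = h" using hc by (simp add: m_assoc)
    finally have "g \<otimes> h \<otimes> inv g = h" .
    then show ?thesis using that by simp
  qed
  have bZ: "b \<in> Z" unfolding Z_def using b c by blast
  have gen: "generate G Z = N" by (rule gen_normal_full[OF G sN simp ZN cl bZ nb])
  have "comm_group (G\<lparr>carrier := N\<rparr>)"
  proof (rule comm_gen_all[OF G sN ZN gen])
    fix u v assume "u \<in> Z" "v \<in> Z"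
    then show "u \<otimes> v = v \<otimes> u" unfolding Z_def by blast
  qed
  then show False using nc by simp
qed

lemma card_gt2:
  fixes G (structure)
  assumes G: "group G" and sN: "subgroup N G" and simp: "simple_group (G\<lparr>carrier := N\<rparr>)"
    and nc: "\<not> comm_group (G\<lparr>carrier := N\<rparr>)" and fin: "finite (carrier G)"
    and x: "x \<in> N" "x \<noteq> \<one>"
  shows "card (conj_orbit G N x) > 2"
proof (rule ccontr)
  interpret group G by fact
  assume "\<not> card (conj_orbit G N x) > 2"
  then have le: "card (conj_orbit G N x) \<le> 2" by simp
  define Ob where "Ob = conj_orbit G N x"
  have xc: "x \<in> carrier G" using x sN subgroup.mem_carrier by metis
  have ON: "Ob \<subseteq> N" unfolding Ob_def by (rule orbit_sub[OF G sN x(1)])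
  have Oc: "Ob \<subseteq> carrier G" using ON sN subgroup.subset by blast
  have finO: "finite Ob" using Oc fin finite_subset by blast
  have c: "u \<otimes> v = v \<otimes> u" if u: "u \<in> Ob" and v: "v \<in> Ob" for u v
  proof (cases "u = v")
    case True then show ?thesis by simp
  next
    case False
    have sub: "{u, v} \<subseteq> Ob" using u v by simp
    have c2: "card {u, v} = 2" using False by simp
    have "card Ob \<le> 2" using le unfolding Ob_def .
    then have "card {u, v} = card Ob" using card_mono[OF finO sub] c2 by simp
    then have Oeq: "Ob = {u, v}" using card_subset_eq[OF finO sub] by simp
    have uc: "u \<in> carrier G" "v \<in> carrier G" using u v Oc by auto
    have "u \<in> N" using u ON by blast
    then have "u \<otimes> v \<otimes> inv u \<in> Ob" unfolding Ob_def
      using orbit_closed[OF G sN xc] v unfolding Ob_def by blast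
    then have w: "u \<otimes> v \<otimes> inv u = u \<or> u \<otimes> v \<otimes> inv u = v" using Oeq by auto
    show ?thesis
    proof (cases "u \<otimes> v \<otimes> inv u = u")
      case True
      then have "u \<otimes> v = u \<otimes> u" using inv_solve_right'[of u "u \<otimes> v" u] uc m_closed[OF uc] by blast
      then have "v = u" using uc by simp
      then show ?thesis using False by simp
    next
      case f2: False
      then have "u \<otimes> v \<otimes> inv u = v" using w by simp
      then show ?thesis using inv_solve_right'[of v "u \<otimes> v" u] uc m_closed[OF uc] by blast
    qed
  qed
  have gen: "generate G Ob = N" unfolding Ob_def by (rule orbit_gen[OF G sN simp x])
  have "comm_group (G\<lparr>carrier := N\<rparr>)" by (rule comm_gen_all[OF G sN ON gen c])
  then show False using nc by simp
qed

lemma main_aux: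
  fixes G (structure) and N :: "'a set" and r :: 'a
  assumes "group G"
    and "finite (carrier G)"
    and "N \<lhd> G"
    and "simple_group (G\<lparr>carrier := N\<rparr>)"
    and "\<not> comm_group (G\<lparr>carrier := N\<rparr>)"
    and "r \<in> N"
    and "conj_orbit G (carrier G) r \<inter> N \<noteq> conj_orbit G N r"
  shows "type_C G (conj_orbit G (carrier G) r)"
proof -
  note G = assms(1) and fin = assms(2) and nN = assms(3) and simp = assms(4) and nc = assms(5)
    and rN = assms(6) and ne = assms(7)
  interpret group G by fact
  have sN: "subgroup N G" using nN normal_imp_subgroup by blast
  have Nc: "N \<subseteq> carrier G" using sN subgroup.subset by blast
  have rc: "r \<in> carrier G" using rN Nc by blast
  define A where "A = conj_orbit G N r"
  define OG where "OG = conj_orbit G (carrier G) r"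
  have OGN: "OG \<subseteq> N" unfolding OG_def conj_orbit_def
    using nN rN by (auto simp: normal_inv_iff)
  have AOG: "A \<subseteq> OG" unfolding A_def OG_def conj_orbit_def using Nc by blast
  have "OG \<noteq> A" using ne OGN unfolding A_def OG_def by blast
  then obtain s0 where s0: "s0 \<in> OG" "s0 \<notin> A" using AOG by blast
  then obtain g where g: "g \<in> carrier G" "s0 = g \<otimes> r \<otimes> inv g" unfolding OG_def conj_orbit_def by auto
  have s0N: "s0 \<in> N" using s0 OGN by blast
  have s0c: "s0 \<in> carrier G" using s0N Nc by blast
  have rback: "r = inv g \<otimes> s0 \<otimes> g" using g rc by (simp add: m_assoc[symmetric]) (simp add: m_assoc)
  have r1: "r \<noteq> \<one>"
  proof
    assume r1: "r = \<one>"
    have "s0 = \<one>" using g r1 by simp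
    moreover have "r \<in> A" unfolding A_def by (rule orbit_self[OF G sN rc])
    ultimately show False using s0 r1 by simp
  qed
  have s01: "s0 \<noteq> \<one>" using rback r1 g by auto
  define B where "B = conj_orbit G N s0"
  have AN: "A \<subseteq> N" unfolding A_def by (rule orbit_sub[OF G sN rN])
  have BN: "B \<subseteq> N" unfolding B_def by (rule orbit_sub[OF G sN s0N])
  have Ac: "A \<subseteq> carrier G" using AN Nc by blast
  have rA: "r \<in> A" unfolding A_def by (rule orbit_self[OF G sN rc])
  have s0B: "s0 \<in> B" unfolding B_def by (rule orbit_self[OF G sN s0c])
  have genA: "generate G A = N" unfolding A_def by (rule orbit_gen[OF G sN simp rN r1])
  have "\<exists>a\<in>A. \<exists>b\<in>B. a \<otimes> b \<noteq> b \<otimes> a"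
  proof (rule ccontr)
    assume "\<not> ?thesis"
    then have cm: "\<And>a. a \<in> A \<Longrightarrow> a \<otimes> s0 = s0 \<otimes> a" using s0B by blast
    have "h \<otimes> s0 = s0 \<otimes> h" if hN: "h \<in> N" for h
    proof -
      have "h \<in> generate G A" using hN genA by simp
      then show ?thesis using gen_comm[OF G Ac s0c] cm by blast
    qed
    then have "s0 = \<one>" by (rule central_trivial[OF G sN simp nc s0N])
    then show False using s01 by simp
  qed
  then obtain a b where ab: "a \<in> A" "b \<in> B" "a \<otimes> b \<noteq> b \<otimes> a" by blast
  have Oa: "conj_orbit G N a = A" unfolding A_def by (rule orbit_trans[OF G sN rc]) (use ab A_def in simp)
  have Ob: "conj_orbit G N b = B" unfolding B_def by (rule orbit_trans[OF G sN s0c]) (use ab B_def in simp)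
  have aN: "a \<in> N" using ab AN by blast
  have bN: "b \<in> N" using ab BN by blast
  have aOG: "a \<in> OG" using ab AOG by blast
  obtain n where n: "n \<in> N" "b = n \<otimes> s0 \<otimes> inv n" using ab(2) unfolding B_def conj_orbit_def by auto
  have bOG: "b \<in> OG" unfolding OG_def n(2)
    by (rule orbit_closed[OF G subgroup_self rc]) (use s0 OG_def n Nc in auto)
  have a1: "a \<noteq> \<one>" using ab bN Nc by auto
  have b1: "b \<noteq> \<one>" using ab aN Nc by auto
  have AB: "A \<noteq> B" using s0 s0B by blast
  have gen: "generate G (A \<union> B) = N"
  proof (rule gen_normal_full[OF G sN simp _ _ _ r1])
    show "A \<union> B \<subseteq> N" using AN BN by blast
    show "r \<in> A \<union> B" using rA by blast
    fix h g assume "h \<in> A \<union> B" "g \<in> N"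
    then show "g \<otimes> h \<otimes> inv g \<in> A \<union> B"
      unfolding A_def B_def using orbit_closed[OF G sN rc] orbit_closed[OF G sN s0c] by blast
  qed
  have cA: "card A > 2" using card_gt2[OF G sN simp nc fin aN a1] Oa by simp
  have cB: "card B > 2" using card_gt2[OF G sN simp nc fin bN b1] Ob by simp
  show ?thesis unfolding type_C_def
  proof (intro exI conjI)
    show "subgroup N G" by fact
    show "a \<in> N \<inter> conj_orbit G (carrier G) r" using aN aOG OG_def by simp
    show "b \<in> N \<inter> conj_orbit G (carrier G) r" using bN bOG OG_def by simp
    show "a \<otimes> b \<noteq> b \<otimes> a" by fact
    show "N = generate G (conj_orbit G N a \<union> conj_orbit G N b)" using gen Oa Ob by simp
    show "conj_orbit G N a \<noteq> conj_orbit G N b" using AB Oa Ob by simp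
    show "2 < min (card (conj_orbit G N a)) (card (conj_orbit G N b)) \<or>
      4 < max (card (conj_orbit G N a)) (card (conj_orbit G N b))" using cA cB Oa Ob by simp
  qed
qed


theorem mainTheorem4:
  fixes G :: "('a, 'b) monoid_scheme" and N :: "'a set" and r :: 'a
  assumes "group G"
    and "finite (carrier G)"
    and "N \<lhd> G"
    and "simple_group (G\<lparr>carrier := N\<rparr>)"
    and "\<not> comm_group (G\<lparr>carrier := N\<rparr>)"
    and "r \<in> N"
    and "conj_orbit G (carrier G) r \<inter> N \<noteq> conj_orbit G N r"
  shows "type_C G (conj_orbit G (carrier G) r)"
  using main_aux[OF assms] .

end
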